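(* Let $\Gamma_1=(N,A,u)$ and $\Gamma_2=(M,B,v)$ be games and let $g=(\pi;(\tau_i)_{i\in N})$ be a cardinal game isomorphism from $\Gamma_1$ to $\Gamma_2$. Then for each $i\in N$ there exist $\beta_i>0$ and $\gamma_i\in\mathbb{R}$ with $\beta_i\tilde u_i(\sigma)+\gamma_i=\tilde v_{g.i}(g.\sigma)$ for all $\sigma\in\Delta(A)$, and $g$ preserves: (1) the players' best response correspondences: for all $i\in N$ and $\sigma\in\Delta(A)$, $\sigma_i\in\tilde b_i(\sigma_{-i})$ in $\Gamma_1$ if and only if $(g.\sigma)_{g.i}\in\tilde b_{g.i}((g.\sigma)_{-g.i})$ in $\Gamma_2$; (2) the game's best response correspondence: for all $\sigma,\sigma'\in\Delta(A)$, $\sigma\in\tilde b(\sigma')$ in $\Gamma_1$ if and only if $g.\sigma\in\tilde b(g.\sigma')$ in $\Gamma_2$; (3) mixed strategy Nash equilibria: $\sigma$ is a Nash equilibrium of $\Gamma_1$ if and only if $g.\sigma$ is a Nash equilibrium of $\Gamma_2$; (4) strict dominance of mixed strategies over pure strategies: for $i\in N$, $\sigma_i\in\Delta(A_i)$ and $s_i\in A_i$, $\sigma_i$ strictly dominates $s_i$ for player $i$ in $\Gamma_1$ if and only if $\sigma_i\circ\tau_i^{-1}$ strictly dominates $\tau_i(s_i)$ for player $\pi(i)$ in $\Gamma_2$.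
   Context: A (finite normal-form) game $\Gamma=(N,A,u)$ consists of a finite set $N$ of at least two players, a finite non-empty strategy set $A_i$ for each $i\in N$, $A=\times_{i\in N}A_i$, and utility functions $u_i:A\to\mathbb{R}$. $\Delta(A_i)$ is the set of probability distributions on $A_i$, $\Delta(A)=\times_{i\in N}\Delta(A_i)$, $\Delta(A_{-i})=\times_{j\neq i}\Delta(A_j)$, $\sigma(s)=\prod_i\sigma_i(s_i)$, and the expected utility is $\tilde u_i(\sigma)=\sum_{s\in A}\sigma(s)u_i(s)$ (pure strategies are identified with point-mass distributions). A game bijection $g=(\pi;(\tau_i)_{i\in N})$ from $\Gamma_1=(N,A,u)$ to $\Gamma_2=(M,B,v)$ consists of a bijection $\pi:N\to M$ and bijections $\tau_i:A_i\to B_{\pi(i)}$; write $g.i=\pi(i)$ and $g.\sigma\in\Delta(B)$ for the mixed profile whose component for player $\pi(i)$ is $\sigma_i\circ\tau_i^{-1}$. $g$ is a cardinal game isomorphism if for all $i\in N$, $\sigma,\sigma'\in\Delta(A)$: $\tilde u_i(\sigma)\le\tilde u_i(\sigma')\iff\tilde v_{g.i}(g.\sigma)\le\tilde v_{g.i}(g.\sigma')$. Player $i$'s best response correspondence is $\tilde b_i(\sigma_{-i})=\arg\max_{\sigma_i\in\Delta(A_i)}\tilde u_i(\sigma_i,\sigma_{-i})$; the game's is $\tilde b(\sigma)=\{\sigma'\in\Delta(A):\sigma_i'\in\tilde b_i(\sigma_{-i})\ \forall i\}$. $\sigma$ is a Nash equilibrium if no player $i$ has $\sigma_i'\in\Delta(A_i)$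 with $\tilde u_i(\sigma_i',\sigma_{-i})>\tilde u_i(\sigma_i,\sigma_{-i})$. $\sigma_i\in\Delta(A_i)$ strictly dominates $s_i\in A_i$ if $\tilde u_i(\sigma_i,\sigma_{-i})>\tilde u_i(s_i,\sigma_{-i})$ for all $\sigma_{-i}\in\Delta(A_{-i})$. *)

theory Defs
  imports Complex_Main "HOL-Library.FuncSet"
begin

text \<open>A game is given by a player set N, strategy sets A i, and utilities u i,
  where pure profiles are the extensional functions in PiE N A.\<close>

definition game :: "'p set \<Rightarrow> ('p \<Rightarrow> 's set) \<Rightarrow> ('p \<Rightarrow> ('p \<Rightarrow> 's) \<Rightarrow> real) \<Rightarrow> bool" where
  "game N A u \<longleftrightarrow> finite N \<and> card N \<ge> 2 \<and> (\<forall>i\<in>N. finite (A i) \<and> A i \<noteq> {})"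

definition Delta :: "'s set \<Rightarrow> ('s \<Rightarrow> real) set" where
  "Delta S = {d. (\<forall>x\<in>S. 0 \<le> d x) \<and> (\<forall>x. x \<notin> S \<longrightarrow> d x = 0) \<and> sum d S = 1}"

definition mixed :: "'p set \<Rightarrow> ('p \<Rightarrow> 's set) \<Rightarrow> ('p \<Rightarrow> 's \<Rightarrow> real) set" where
  "mixed N A = PiE N (\<lambda>i. Delta (A i))"

definition EU :: "'p set \<Rightarrow> ('p \<Rightarrow> 's set) \<Rightarrow> ('p \<Rightarrow> ('p \<Rightarrow> 's) \<Rightarrow> real) \<Rightarrow> 'p \<Rightarrow> ('p \<Rightarrow> 's \<Rightarrow> real) \<Rightarrow> real" where
  "EU N A u i \<sigma> = (\<Sum>s\<in>PiE N A. (\<Prod>j\<in>N. \<sigma> j (s j)) * u i s)"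

definition pure :: "'s \<Rightarrow> 's \<Rightarrow> real" where
  "pure s = (\<lambda>x. if x = s then 1 else 0)"

definition best_resp :: "'p set \<Rightarrow> ('p \<Rightarrow> 's set) \<Rightarrow> ('p \<Rightarrow> ('p \<Rightarrow> 's) \<Rightarrow> real) \<Rightarrow> 'p \<Rightarrow> ('p \<Rightarrow> 's \<Rightarrow> real) \<Rightarrow> ('s \<Rightarrow> real) \<Rightarrow> bool" where
  "best_resp N A u i \<sigma> d \<longleftrightarrow> d \<in> Delta (A i) \<and>
     (\<forall>d'\<in>Delta (A i). EU N A u i (\<sigma>(i := d')) \<le> EU N A u i (\<sigma>(i := d)))"

definition game_best_resp :: "'p set \<Rightarrow> ('p \<Rightarrow> 's set) \<Rightarrow> ('p \<Rightarrow> ('p \<Rightarrow> 's) \<Rightarrow> real) \<Rightarrow> ('p \<Rightarrow> 's \<Rightarrow> real) \<Rightarrow> ('p \<Rightarrow> 's \<Rightarrow> real) \<Rightarrow> bool" where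
  "game_best_resp N A u \<sigma> \<sigma>' \<longleftrightarrow> \<sigma> \<in> mixed N A \<and> (\<forall>i\<in>N. best_resp N A u i \<sigma>' (\<sigma> i))"

definition nash :: "'p set \<Rightarrow> ('p \<Rightarrow> 's set) \<Rightarrow> ('p \<Rightarrow> ('p \<Rightarrow> 's) \<Rightarrow> real) \<Rightarrow> ('p \<Rightarrow> 's \<Rightarrow> real) \<Rightarrow> bool" where
  "nash N A u \<sigma> \<longleftrightarrow> \<sigma> \<in> mixed N A \<and>
     \<not> (\<exists>i\<in>N. \<exists>d\<in>Delta (A i). EU N A u i (\<sigma>(i := d)) > EU N A u i \<sigma>)"

text \<open>d strictly dominates pure strategy s for player i (opponents' mixed profiles
  are represented by full mixed profiles whose i-th component is ignored).\<close>
definition strictly_dominates :: "'p set \<Rightarrow> ('p \<Rightarrow> 's set) \<Rightarrow> ('p \<Rightarrow> ('p \<Rightarrow> 's) \<Rightarrow> real) \<Rightarrow> 'p \<Rightarrow> ('s \<Rightarrow> real) \<Rightarrow> 's \<Rightarrow> bool" where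
  "strictly_dominates N A u i d s \<longleftrightarrow>
     (\<forall>\<sigma>\<in>mixed N A. EU N A u i (\<sigma>(i := d)) > EU N A u i (\<sigma>(i := pure s)))"

definition push_dist :: "('s \<Rightarrow> 't) \<Rightarrow> 's set \<Rightarrow> ('s \<Rightarrow> real) \<Rightarrow> 't \<Rightarrow> real" where
  "push_dist t A d = (\<lambda>b. if b \<in> t ` A then d (inv_into A t b) else 0)"

definition gmap :: "'p set \<Rightarrow> ('p \<Rightarrow> 's set) \<Rightarrow> ('p \<Rightarrow> 'q) \<Rightarrow> ('p \<Rightarrow> 's \<Rightarrow> 't)
     \<Rightarrow> ('p \<Rightarrow> 's \<Rightarrow> real) \<Rightarrow> 'q \<Rightarrow> 't \<Rightarrow> real" where
  "gmap N A \<pi> \<tau> \<sigma> = (\<lambda>j\<in>\<pi> ` N. let i = inv_into N \<pi> j in push_dist (\<tau> i) (A i) (\<sigma> i))"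

definition game_bijection :: "'p set \<Rightarrow> ('p \<Rightarrow> 's set) \<Rightarrow> 'q set \<Rightarrow> ('q \<Rightarrow> 't set)
     \<Rightarrow> ('p \<Rightarrow> 'q) \<Rightarrow> ('p \<Rightarrow> 's \<Rightarrow> 't) \<Rightarrow> bool" where
  "game_bijection N A M B \<pi> \<tau> \<longleftrightarrow> bij_betw \<pi> N M \<and> (\<forall>i\<in>N. bij_betw (\<tau> i) (A i) (B (\<pi> i)))"

definition cardinal_iso :: "'p set \<Rightarrow> ('p \<Rightarrow> 's set) \<Rightarrow> ('p \<Rightarrow> ('p \<Rightarrow> 's) \<Rightarrow> real)
     \<Rightarrow> 'q set \<Rightarrow> ('q \<Rightarrow> 't set) \<Rightarrow> ('q \<Rightarrow> ('q \<Rightarrow> 't) \<Rightarrow> real)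
     \<Rightarrow> ('p \<Rightarrow> 'q) \<Rightarrow> ('p \<Rightarrow> 's \<Rightarrow> 't) \<Rightarrow> bool" where
  "cardinal_iso N A u M B v \<pi> \<tau> \<longleftrightarrow> game_bijection N A M B \<pi> \<tau> \<and>
     (\<forall>i\<in>N. \<forall>\<sigma>\<in>mixed N A. \<forall>\<sigma>'\<in>mixed N A.
        EU N A u i \<sigma> \<le> EU N A u i \<sigma>' \<longleftrightarrow>
        EU M B v (\<pi> i) (gmap N A \<pi> \<tau> \<sigma>) \<le> EU M B v (\<pi> i) (gmap N A \<pi> \<tau> \<sigma>'))"

end

theory Submission
  imports Defs
begin

definition maff :: "'p set \<Rightarrow> ('p \<Rightarrow> 's set) \<Rightarrow> (('p \<Rightarrow> 's \<Rightarrow> real) \<Rightarrow> real) \<Rightarrow> bool" where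
  "maff N A F \<longleftrightarrow> (\<forall>\<sigma>\<in>mixed N A. \<forall>j\<in>N. \<forall>d1 d2 p q.
     F (\<sigma>(j := (\<lambda>a. p * d1 a + q * d2 a))) = p * F (\<sigma>(j := d1)) + q * F (\<sigma>(j := d2)))"

lemma EU_upd_lin:
  assumes "finite N" "j \<in> N"
  shows "EU N A u i (\<sigma>(j := (\<lambda>a. p * d1 a + q * d2 a))) =
         p * EU N A u i (\<sigma>(j := d1)) + q * EU N A u i (\<sigma>(j := d2))"
proof -
  have *: "(\<Prod>k\<in>N. (\<sigma>(j:=x)) k (s k)) = x (s j) * (\<Prod>k\<in>N-{j}. \<sigma> k (s k))" for x s
  proof -
    have "(\<Prod>k\<in>N. (\<sigma>(j:=x)) k (s k)) = (\<sigma>(j:=x)) j (s j) * (\<Prod>k\<in>N-{j}. (\<sigma>(j:=x)) k (s k))"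
      using prod.remove[OF assms] by blast
    also have "(\<Prod>k\<in>N-{j}. (\<sigma>(j:=x)) k (s k)) = (\<Prod>k\<in>N-{j}. \<sigma> k (s k))"
      by (rule prod.cong) auto
    finally show ?thesis by simp
  qed
  define R where "R s = (\<Prod>k\<in>N-{j}. \<sigma> k (s k)) * u i s" for s
  have E: "EU N A u i (\<sigma>(j:=x)) = (\<Sum>s\<in>PiE N A. x (s j) * R s)" for x
    unfolding EU_def * R_def by (simp add: mult.assoc)
  have "(\<Sum>s\<in>PiE N A. (p * d1 (s j) + q * d2 (s j)) * R s)
      = (\<Sum>s\<in>PiE N A. p * (d1 (s j) * R s) + q * (d2 (s j) * R s))"
    by (rule sum.cong) (simp_all add: distrib_right mult.assoc)
  also have "\<dots> = p * (\<Sum>s\<in>PiE N A. d1 (s j) * R s) + q * (\<Sum>s\<in>PiE N A. d2 (s j) * R s)"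
    by (simp add: sum.distrib sum_distrib_left)
  finally show ?thesis unfolding E by simp
qed

lemma maff_EU: assumes "finite N" shows "maff N A (EU N A u i)"
  unfolding maff_def
proof (intro ballI allI)
  fix \<sigma> j d1 d2 p q assume "j \<in> N"
  then show "EU N A u i (\<sigma>(j := (\<lambda>a. p * d1 a + q * d2 a))) =
         p * EU N A u i (\<sigma>(j := d1)) + q * EU N A u i (\<sigma>(j := d2))"
    by (rule EU_upd_lin[OF assms])
qed

lemma maff_neg: "maff N A F \<Longrightarrow> maff N A (\<lambda>\<sigma>. - F \<sigma>)"
  unfolding maff_def by (simp add: algebra_simps)

lemma maff_D: "maff N A F \<Longrightarrow> \<sigma>\<in>mixed N A \<Longrightarrow> j\<in>N \<Longrightarrow>
     F (\<sigma>(j := (\<lambda>a. p * d1 a + q * d2 a))) = p * F (\<sigma>(j := d1)) + q * F (\<sigma>(j := d2))"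
  unfolding maff_def by blast

lemma mixed_upd: "\<sigma> \<in> mixed N A \<Longrightarrow> j \<in> N \<Longrightarrow> d \<in> Delta (A j) \<Longrightarrow> \<sigma>(j := d) \<in> mixed N A"
  unfolding mixed_def by (auto simp: PiE_def extensional_def)

lemma mixed_in: "\<sigma> \<in> mixed N A \<Longrightarrow> j \<in> N \<Longrightarrow> \<sigma> j \<in> Delta (A j)"
  unfolding mixed_def by auto

lemma Delta_comb: "d1 \<in> Delta S \<Longrightarrow> d2 \<in> Delta S \<Longrightarrow> 0 \<le> l \<Longrightarrow> l \<le> 1 \<Longrightarrow>
   (\<lambda>a. (1 - l) * d1 a + l * d2 a) \<in> Delta S"
proof -
  assume a: "d1 \<in> Delta S" "d2 \<in> Delta S" "0 \<le> l" "l \<le> 1"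
  have "sum (\<lambda>a. (1 - l) * d1 a + l * d2 a) S = (1 - l) * sum d1 S + l * sum d2 S"
    by (simp add: sum.distrib sum_distrib_left)
  also have "\<dots> = 1" using a(1,2) unfolding Delta_def by simp
  finally have s: "sum (\<lambda>a. (1 - l) * d1 a + l * d2 a) S = 1" .
  have "\<forall>x\<in>S. 0 \<le> (1 - l) * d1 x + l * d2 x" using a unfolding Delta_def by simp
  moreover have "\<forall>x. x \<notin> S \<longrightarrow> (1 - l) * d1 x + l * d2 x = 0" using a unfolding Delta_def by simp
  ultimately show ?thesis using s unfolding Delta_def by blast
qed

lemma mixed_eq: "\<sigma> \<in> mixed N A \<Longrightarrow> \<tau> \<in> mixed N A \<Longrightarrow> {j\<in>N. \<sigma> j \<noteq> \<tau> j} = {} \<Longrightarrow> \<sigma> = \<tau>"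
proof (rule ext)
  fix x assume a: "\<sigma> \<in> mixed N A" "\<tau> \<in> mixed N A" "{j\<in>N. \<sigma> j \<noteq> \<tau> j} = {}"
  show "\<sigma> x = \<tau> x"
  proof (cases "x \<in> N")
    case True then show ?thesis using a(3) by auto
  next
    case False
    have "\<sigma> x = undefined" using a(1) False unfolding mixed_def by (rule PiE_arb)
    moreover have "\<tau> x = undefined" using a(2) False unfolding mixed_def by (rule PiE_arb)
    ultimately show ?thesis by simp
  qed
qed

lemma straddle:
  assumes fin: "finite N" and mf: "maff N A F"
  shows "\<sigma>\<in>mixed N A \<Longrightarrow> \<tau>\<in>mixed N A \<Longrightarrow> F \<sigma> < c \<Longrightarrow> c < F \<tau> \<Longrightarrow>
    \<exists>\<rho>\<in>mixed N A. \<exists>j\<in>N. \<exists>d\<in>Delta (A j). F \<rho> < c \<and> c < F (\<rho>(j:=d))"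
proof (induction "card {j\<in>N. \<sigma> j \<noteq> \<tau> j}" arbitrary: \<sigma> \<tau> rule: less_induct)
  case less
  let ?D = "{j\<in>N. \<sigma> j \<noteq> \<tau> j}"
  have "?D \<noteq> {}"
  proof
    assume "?D = {}"
    then have "\<sigma> = \<tau>" using mixed_eq[OF less(2,3)] by blast
    then have "F \<sigma> = F \<tau>" by simp
    then show False using less(4,5) by linarith
  qed
  then obtain j where j: "j \<in> N" "\<sigma> j \<noteq> \<tau> j" by auto
  have fD: "finite ?D" using fin by auto
  have sj: "\<sigma> j \<in> Delta (A j)" and tj: "\<tau> j \<in> Delta (A j)" using mixed_in[OF less(2) j(1)] mixed_in[OF less(3) j(1)] by auto
  define \<rho> where "\<rho> = \<sigma>(j := \<tau> j)"
  define \<tau>' where "\<tau>' = \<tau>(j := \<sigma> j)"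
  have \<rho>m: "\<rho> \<in> mixed N A" unfolding \<rho>_def by (rule mixed_upd[OF less(2) j(1) tj])
  have \<tau>'m: "\<tau>' \<in> mixed N A" unfolding \<tau>'_def by (rule mixed_upd[OF less(3) j(1) sj])
  have D1: "{k\<in>N. \<rho> k \<noteq> \<tau> k} = ?D - {j}" unfolding \<rho>_def by auto
  have D2: "{k\<in>N. \<sigma> k \<noteq> \<tau>' k} = ?D - {j}" unfolding \<tau>'_def by auto
  have lt: "card (?D - {j}) < card ?D" using fD j by (intro card_Diff1_less) auto
  show ?case
  proof (cases "F \<rho> > c")
    case True
    then show ?thesis using less(2,4) j tj unfolding \<rho>_def by blast
  next
    case False
    show ?thesis
    proof (cases "F \<rho> < c")
      case True
      show ?thesis using less(1)[of \<rho> \<tau>] D1 lt \<rho>m less(3,5) True by auto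
    next
      case False
      with \<open>\<not> F \<rho> > c\<close> have Fr: "F \<rho> = c" by auto
      show ?thesis
      proof (cases "F \<tau>' < c")
        case True
        have "\<tau>'(j := \<tau> j) = \<tau>" unfolding \<tau>'_def by simp
        then show ?thesis using True less(5) \<tau>'m j tj by metis
      next
        case False
        show ?thesis
        proof (cases "F \<tau>' > c")
          case True
          show ?thesis using less(1)[of \<sigma> \<tau>'] D2 lt \<tau>'m less(2,4) True by auto
        next
          case False
          with \<open>\<not> F \<tau>' < c\<close> have Ft: "F \<tau>' = c" by auto
          define m where "m = (\<lambda>a. (1/2::real) * \<sigma> j a + (1/2) * \<tau> j a)"
          have mD: "m \<in> Delta (A j)" unfolding m_def using Delta_comb[OF sj tj, of "1/2"] by simp
          define \<sigma>h where "\<sigma>h = \<sigma>(j := m)"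
          define \<tau>h where "\<tau>h = \<tau>(j := m)"
          have "F \<sigma>h = 1/2 * F (\<sigma>(j := \<sigma> j)) + 1/2 * F (\<sigma>(j := \<tau> j))"
            unfolding \<sigma>h_def m_def by (rule maff_D[OF mf less(2) j(1)])
          then have Fs: "F \<sigma>h < c" using Fr less(4) unfolding \<rho>_def by simp
          have "F \<tau>h = 1/2 * F (\<tau>(j := \<sigma> j)) + 1/2 * F (\<tau>(j := \<tau> j))"
            unfolding \<tau>h_def m_def by (rule maff_D[OF mf less(3) j(1)])
          then have Ft2: "F \<tau>h > c" using Ft less(5) unfolding \<tau>'_def by simp
          have D3: "{k\<in>N. \<sigma>h k \<noteq> \<tau>h k} = ?D - {j}" unfolding \<sigma>h_def \<tau>h_def by auto
          have "\<sigma>h \<in> mixed N A" "\<tau>h \<in> mixed N A" unfolding \<sigma>h_def \<tau>h_def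
            by (rule mixed_upd[OF less(2) j(1) mD], rule mixed_upd[OF less(3) j(1) mD])
          then show ?thesis using less(1)[of \<sigma>h \<tau>h] D3 lt Fs Ft2 by auto
        qed
      qed
    qed
  qed
qed

lemma straddle_weak:
  fixes F :: "('p \<Rightarrow> 's \<Rightarrow> real) \<Rightarrow> real" and N :: "'p set"
  assumes fin: "finite N"
  shows "\<sigma>\<in>mixed N A \<Longrightarrow> \<tau>\<in>mixed N A \<Longrightarrow> F \<sigma> \<le> c \<Longrightarrow> c < F \<tau> \<Longrightarrow>
    \<exists>\<rho>\<in>mixed N A. \<exists>j\<in>N. \<exists>d\<in>Delta (A j). F \<rho> \<le> c \<and> c < F (\<rho>(j:=d))"
proof (induction "card {j\<in>N. \<sigma> j \<noteq> \<tau> j}" arbitrary: \<sigma> \<tau> rule: less_induct)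
  case less
  let ?D = "{j\<in>N. \<sigma> j \<noteq> \<tau> j}"
  have "?D \<noteq> {}"
  proof
    assume "?D = {}"
    then have "\<sigma> = \<tau>" using mixed_eq[OF less(2,3)] by blast
    then have "F \<sigma> = F \<tau>" by simp
    then show False using less(4,5) by linarith
  qed
  then obtain j where j: "j \<in> N" "\<sigma> j \<noteq> \<tau> j" by auto
  have fD: "finite ?D" using fin by auto
  have tj: "\<tau> j \<in> Delta (A j)" using mixed_in[OF less(3) j(1)] by auto
  define \<rho> where "\<rho> = \<sigma>(j := \<tau> j)"
  have \<rho>m: "\<rho> \<in> mixed N A" unfolding \<rho>_def by (rule mixed_upd[OF less(2) j(1) tj])
  have D1: "{k\<in>N. \<rho> k \<noteq> \<tau> k} = ?D - {j}" unfolding \<rho>_def by auto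
  have lt: "card (?D - {j}) < card ?D" using fD j by (intro card_Diff1_less) auto
  show ?case
  proof (cases "F \<rho> > c")
    case True
    then show ?thesis using less(2,4) j tj unfolding \<rho>_def by blast
  next
    case False
    show ?thesis using less(1)[of \<rho> \<tau>] D1 lt \<rho>m less(3,5) False by auto
  qed
qed


locale ordpair =
  fixes N :: "'p set" and A :: "'p \<Rightarrow> 's set" and F H :: "('p \<Rightarrow> 's \<Rightarrow> real) \<Rightarrow> real"
  assumes fin: "finite N" and mF: "maff N A F" and mH: "maff N A H"
    and ord: "\<And>\<sigma> \<sigma>'. \<sigma> \<in> mixed N A \<Longrightarrow> \<sigma>' \<in> mixed N A \<Longrightarrow> F \<sigma> \<le> F \<sigma>' \<longleftrightarrow> H \<sigma> \<le> H \<sigma>'"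
begin

definition "V = F ` mixed N A"
definition "G x = H (SOME \<sigma>. \<sigma> \<in> mixed N A \<and> F \<sigma> = x)"

lemma G_F: assumes "\<sigma> \<in> mixed N A" shows "G (F \<sigma>) = H \<sigma>"
proof -
  have ex: "\<exists>\<sigma>'. \<sigma>' \<in> mixed N A \<and> F \<sigma>' = F \<sigma>" using assms by blast
  define \<sigma>' where "\<sigma>' = (SOME \<sigma>'. \<sigma>' \<in> mixed N A \<and> F \<sigma>' = F \<sigma>)"
  have s: "\<sigma>' \<in> mixed N A \<and> F \<sigma>' = F \<sigma>" unfolding \<sigma>'_def by (rule someI_ex[OF ex])
  then have "H \<sigma>' \<le> H \<sigma>" "H \<sigma> \<le> H \<sigma>'" using ord[OF _ assms, of \<sigma>'] ord[OF assms, of \<sigma>'] by auto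
  then show ?thesis unfolding G_def \<sigma>'_def[symmetric] by simp
qed

lemma seg:
  assumes r: "\<rho> \<in> mixed N A" and j: "j \<in> N" and d: "d \<in> Delta (A j)"
    and lt: "F \<rho> < F (\<rho>(j:=d))"
  shows "\<exists>\<alpha> \<kappa>. \<forall>x. F \<rho> \<le> x \<and> x \<le> F (\<rho>(j:=d)) \<longrightarrow> x \<in> V \<and> G x = \<alpha> * x + \<kappa>"
proof -
  define a where "a = F \<rho>"
  define b where "b = F (\<rho>(j:=d))"
  define ha where "ha = H \<rho>"
  define hb where "hb = H (\<rho>(j:=d))"
  define \<alpha> where "\<alpha> = (hb - ha) / (b - a)"
  define \<kappa> where "\<kappa> = ha - \<alpha> * a"
  have ab: "a < b" using lt unfolding a_def b_def .
  have rj: "\<rho> j \<in> Delta (A j)" using mixed_in[OF r j] .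
  have rr: "\<rho>(j := \<rho> j) = \<rho>" by simp
  have "x \<in> V \<and> G x = \<alpha> * x + \<kappa>" if x: "a \<le> x" "x \<le> b" for x
  proof -
    define l where "l = (x - a) / (b - a)"
    have l0: "0 \<le> l" "l \<le> 1" unfolding l_def using x ab by (auto simp: field_simps)
    define \<sigma> where "\<sigma> = \<rho>(j := (\<lambda>t. (1 - l) * \<rho> j t + l * d t))"
    have sm: "\<sigma> \<in> mixed N A" unfolding \<sigma>_def
      by (rule mixed_upd[OF r j Delta_comb[OF rj d l0]])
    have "F \<sigma> = (1 - l) * F (\<rho>(j := \<rho> j)) + l * F (\<rho>(j := d))"
      unfolding \<sigma>_def by (rule maff_D[OF mF r j])
    then have F1: "F \<sigma> = (1 - l) * a + l * b" unfolding rr a_def b_def by simp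
    have lba: "l * (b - a) = x - a" unfolding l_def using ab by simp
    have "(1 - l) * a + l * b = a + l * (b - a)" by (simp add: algebra_simps)
    then have Fs: "F \<sigma> = x" using F1 lba by simp
    have "H \<sigma> = (1 - l) * H (\<rho>(j := \<rho> j)) + l * H (\<rho>(j := d))"
      unfolding \<sigma>_def by (rule maff_D[OF mH r j])
    then have Hs: "H \<sigma> = (1 - l) * ha + l * hb" unfolding rr ha_def hb_def by simp
    have "G x = H \<sigma>" using G_F[OF sm] Fs by simp
    also have "\<dots> = ha + l * (hb - ha)" unfolding Hs by (simp add: algebra_simps)
    also have "l * (hb - ha) = \<alpha> * (x - a)" unfolding l_def \<alpha>_def by simp
    also have "ha + \<alpha> * (x - a) = \<alpha> * x + \<kappa>" unfolding \<kappa>_def by (simp add: algebra_simps)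
    finally show ?thesis using sm Fs unfolding V_def by blast
  qed
  then show ?thesis unfolding a_def b_def by blast
qed

lemma V_conv: assumes "x \<in> V" "y \<in> V" "x < z" "z < y" shows "z \<in> V"
proof -
  obtain \<sigma> \<tau> where st: "\<sigma> \<in> mixed N A" "\<tau> \<in> mixed N A" "F \<sigma> = x" "F \<tau> = y"
    using assms(1,2) unfolding V_def by auto
  obtain \<rho> j d where r: "\<rho> \<in> mixed N A" "j \<in> N" "d \<in> Delta (A j)" "F \<rho> < z" "z < F (\<rho>(j:=d))"
    using straddle[OF fin mF st(1,2), of z] st assms by auto
  obtain \<alpha> \<kappa> where "\<forall>x. F \<rho> \<le> x \<and> x \<le> F (\<rho>(j:=d)) \<longrightarrow> x \<in> V \<and> G x = \<alpha> * x + \<kappa>"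
    using seg[OF r(1,2,3)] r(4,5) by fastforce
  then show ?thesis using r(4,5) by auto
qed

lemma V_connected: "connected V"
  unfolding connected_iff_interval
proof (intro ballI allI impI)
  fix x y z assume a: "x \<in> V" "y \<in> V" "x \<le> z" "z \<le> y"
  show "z \<in> V"
  proof (cases "z = x \<or> z = y")
    case True then show ?thesis using a by auto
  next
    case False then show ?thesis using V_conv[OF a(1,2)] a(3,4) by auto
  qed
qed

lemma loc_aff: assumes c: "c \<in> V"
  shows "\<exists>\<epsilon>>0. \<exists>\<alpha> \<kappa>. \<forall>x\<in>V. \<bar>x - c\<bar> < \<epsilon> \<longrightarrow> G x = \<alpha> * x + \<kappa>"
proof -
  obtain \<sigma>c where sc: "\<sigma>c \<in> mixed N A" "F \<sigma>c = c" using c unfolding V_def by auto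
  consider (i) "\<exists>x\<in>V. x < c" "\<exists>y\<in>V. y > c" | (ii) "\<not>(\<exists>x\<in>V. x < c)" "\<exists>y\<in>V. y > c"
    | (iii) "\<exists>x\<in>V. x < c" "\<not>(\<exists>y\<in>V. y > c)" | (iv) "\<not>(\<exists>x\<in>V. x < c)" "\<not>(\<exists>y\<in>V. y > c)"
    by blast
  then show ?thesis
  proof cases
    case i
    then obtain \<sigma> \<tau> where st: "\<sigma> \<in> mixed N A" "\<tau> \<in> mixed N A" "F \<sigma> < c" "F \<tau> > c"
      unfolding V_def by auto
    obtain \<rho> j d where r: "\<rho> \<in> mixed N A" "j \<in> N" "d \<in> Delta (A j)" "F \<rho> < c" "c < F (\<rho>(j:=d))"
      using straddle[OF fin mF st(1,2), of c] st by auto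
    obtain \<alpha> \<kappa> where ak: "\<forall>x. F \<rho> \<le> x \<and> x \<le> F (\<rho>(j:=d)) \<longrightarrow> x \<in> V \<and> G x = \<alpha> * x + \<kappa>"
      using seg[OF r(1,2,3)] r(4,5) by fastforce
    show ?thesis
      apply (rule exI[of _ "min (c - F \<rho>) (F (\<rho>(j:=d)) - c)"])
      using r(4,5) ak by (auto simp: abs_less_iff)
  next
    case ii
    then obtain \<tau> where st: "\<tau> \<in> mixed N A" "F \<tau> > c" unfolding V_def by auto
    obtain \<rho> j d where r: "\<rho> \<in> mixed N A" "j \<in> N" "d \<in> Delta (A j)" "F \<rho> \<le> c" "c < F (\<rho>(j:=d))"
      using straddle_weak[OF fin sc(1) st(1), of F c] st sc by auto
    have "F \<rho> \<in> V" using r(1) unfolding V_def by auto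
    then have Fr: "F \<rho> = c" using ii r(4) by force
    obtain \<alpha> \<kappa> where ak: "\<forall>x. F \<rho> \<le> x \<and> x \<le> F (\<rho>(j:=d)) \<longrightarrow> x \<in> V \<and> G x = \<alpha> * x + \<kappa>"
      using seg[OF r(1,2,3)] r(4,5) Fr by fastforce
    show ?thesis
      apply (rule exI[of _ "F (\<rho>(j:=d)) - c"])
      using r(5) ak Fr ii by (force simp: abs_less_iff not_less)
  next
    case iii
    then obtain \<sigma> where st: "\<sigma> \<in> mixed N A" "F \<sigma> < c" unfolding V_def by auto
    obtain \<rho> j d where r: "\<rho> \<in> mixed N A" "j \<in> N" "d \<in> Delta (A j)" "- F \<rho> \<le> - c" "- c < - F (\<rho>(j:=d))"
      using straddle_weak[OF fin sc(1) st(1), of "\<lambda>\<sigma>. - F \<sigma>" "- c"] st sc by auto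
    have "F \<rho> \<in> V" using r(1) unfolding V_def by auto
    then have Fr: "F \<rho> = c" using iii r(4) by force
    define \<rho>1 where "\<rho>1 = \<rho>(j:=d)"
    have r1: "\<rho>1 \<in> mixed N A" unfolding \<rho>1_def by (rule mixed_upd[OF r(1,2,3)])
    have rj: "\<rho> j \<in> Delta (A j)" by (rule mixed_in[OF r(1,2)])
    have bk: "\<rho>1(j := \<rho> j) = \<rho>" unfolding \<rho>1_def by simp
    obtain \<alpha> \<kappa> where ak: "\<forall>x. F \<rho>1 \<le> x \<and> x \<le> F \<rho> \<longrightarrow> x \<in> V \<and> G x = \<alpha> * x + \<kappa>"
      using seg[OF r1 r(2) rj] r(4,5) Fr unfolding bk \<rho>1_def by fastforce
    show ?thesis
      apply (rule exI[of _ "c - F \<rho>1"])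
      using r(5) ak Fr iii unfolding \<rho>1_def by (force simp: abs_less_iff not_less)
  next
    case iv
    show ?thesis
      apply (rule exI[of _ 1], simp)
      apply (rule exI[of _ 0], rule exI[of _ "G c"])
      using iv by force
  qed
qed

definition "P c = (SOME p. \<exists>\<epsilon>>0. \<forall>x\<in>V. \<bar>x - c\<bar> < \<epsilon> \<longrightarrow> G x = fst p * x + snd p)"

lemma P_spec: assumes "c \<in> V" shows "\<exists>\<epsilon>>0. \<forall>x\<in>V. \<bar>x - c\<bar> < \<epsilon> \<longrightarrow> G x = fst (P c) * x + snd (P c)"
proof -
  have "\<exists>p. \<exists>\<epsilon>>0. \<forall>x\<in>V. \<bar>x - c\<bar> < \<epsilon> \<longrightarrow> G x = fst p * x + snd p"
    using loc_aff[OF assms] by fastforce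
  then show ?thesis unfolding P_def by (rule someI_ex)
qed

lemma P_loc: assumes c: "c \<in> V" shows "eventually (\<lambda>y. P c = P y) (at c within V)"
proof -
  obtain ec where ec: "ec > 0" "\<forall>x\<in>V. \<bar>x - c\<bar> < ec \<longrightarrow> G x = fst (P c) * x + snd (P c)"
    using P_spec[OF c] by blast
  have "P c = P y" if y: "y \<in> V" "y \<noteq> c" "\<bar>y - c\<bar> < ec" for y
  proof -
    obtain ey where ey: "ey > 0" "\<forall>x\<in>V. \<bar>x - y\<bar> < ey \<longrightarrow> G x = fst (P y) * x + snd (P y)"
      using P_spec[OF y(1)] by blast
    define t where "t = min (1/2) (ey / (2 * \<bar>c - y\<bar>))"
    have t: "0 < t" "t < 1" "t * \<bar>c - y\<bar> < ey" using ey(1) y(2)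
      unfolding t_def by (auto simp: field_simps min_def)
    define z where "z = y + t * (c - y)"
    have e1: "z - y = t * (c - y)" unfolding z_def by simp
    have e2: "c - z = (1 - t) * (c - y)" unfolding z_def by (simp add: algebra_simps)
    have zV: "z \<in> V"
    proof (cases "y < c")
      case True
      have p1: "0 < t * (c - y)" using True t(1) by simp
      have p2: "0 < (1 - t) * (c - y)" using True t(2) by simp
      have "y < z" using e1 p1 by linarith
      moreover have "z < c" using e2 p2 by linarith
      ultimately have "y < z" "z < c" by auto
      then show ?thesis using V_conv[OF y(1) c] by blast
    next
      case False
      then have "c < y" using y(2) by auto
      have p1: "0 < t * (y - c)" using \<open>c < y\<close> t(1) by simp
      have p2: "0 < (1 - t) * (y - c)" using \<open>c < y\<close> t(2) by simp
      have "z < y" using e1 p1 by (simp add: algebra_simps)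
      moreover have "c < z" using e2 p2 by (simp add: algebra_simps)
      ultimately have "c < z" "z < y" by auto
      then show ?thesis using V_conv[OF c y(1)] by blast
    qed
    have zy: "\<bar>z - y\<bar> < ey" unfolding z_def using t by (simp add: abs_mult)
    have zc: "\<bar>z - c\<bar> < ec"
    proof -
      have "z - c = (1 - t) * (y - c)" unfolding z_def by (simp add: algebra_simps)
      then have "\<bar>z - c\<bar> = (1 - t) * \<bar>y - c\<bar>" using t by (simp add: abs_mult)
      also have "\<dots> \<le> \<bar>y - c\<bar>" using t by (simp add: mult_left_le_one_le)
      finally show ?thesis using y(3) by linarith
    qed
    have zne: "z \<noteq> y" unfolding z_def using t y(2) by auto
    have e1: "fst (P c) * y + snd (P c) = fst (P y) * y + snd (P y)"
      using ec(2) ey(2) y(1,3) ey(1) by auto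
    have e2: "fst (P c) * z + snd (P c) = fst (P y) * z + snd (P y)"
      using ec(2) ey(2) zV zc zy by auto
    have "(fst (P c) - fst (P y)) * (z - y) = 0" using e1 e2 by (simp add: algebra_simps)
    then have f: "fst (P c) = fst (P y)" using zne by simp
    then have "snd (P c) = snd (P y)" using e1 by simp
    then show ?thesis using f by (simp add: prod_eq_iff)
  qed
  then show ?thesis unfolding eventually_at using ec(1)
    by (auto simp: dist_real_def intro!: exI[of _ ec])
qed

lemma affine_rel: "\<exists>\<beta>>0. \<exists>\<gamma>. \<forall>\<sigma>\<in>mixed N A. \<beta> * F \<sigma> + \<gamma> = H \<sigma>"
proof (cases "\<exists>\<sigma>0\<in>mixed N A. \<exists>\<sigma>1\<in>mixed N A. F \<sigma>0 < F \<sigma>1")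
  case False
  show ?thesis
  proof (cases "mixed N A = {}")
    case True then show ?thesis by (intro exI[of _ 1]) auto
  next
    case ne: False
    then obtain \<sigma>0 where s0: "\<sigma>0 \<in> mixed N A" by auto
    have "H \<sigma> = H \<sigma>0" if "\<sigma> \<in> mixed N A" for \<sigma>
    proof -
      have "F \<sigma> = F \<sigma>0" using False s0 that by (meson linorder_neqE_linordered_idom)
      then show ?thesis using ord[OF that s0] ord[OF s0 that] by auto
    qed
    moreover have "F \<sigma> = F \<sigma>0" if "\<sigma> \<in> mixed N A" for \<sigma>
      using False s0 that by (meson linorder_neqE_linordered_idom)
    ultimately show ?thesis
      by (intro exI[of _ 1] conjI exI[of _ "H \<sigma>0 - F \<sigma>0"]) auto
  qed
next
  case True
  then obtain \<sigma>0 \<sigma>1 where s: "\<sigma>0 \<in> mixed N A" "\<sigma>1 \<in> mixed N A" "F \<sigma>0 < F \<sigma>1" by auto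
  define c0 where "c0 = F \<sigma>0"
  have c0: "c0 \<in> V" unfolding c0_def V_def using s by auto
  have all: "\<forall>a\<in>V. eventually (\<lambda>b. P a = P b) (at a within V)" using P_loc by blast
  have Pc: "P c = P c0" if "c \<in> V" for c
    using connected_local_const[OF V_connected c0 that all] by simp
  have rel: "H \<sigma> = fst (P c0) * F \<sigma> + snd (P c0)" if "\<sigma> \<in> mixed N A" for \<sigma>
  proof -
    have cV: "F \<sigma> \<in> V" unfolding V_def using that by auto
    obtain e where "e > 0" "\<forall>x\<in>V. \<bar>x - F \<sigma>\<bar> < e \<longrightarrow> G x = fst (P (F \<sigma>)) * x + snd (P (F \<sigma>))"
      using P_spec[OF cV] by blast
    then have "G (F \<sigma>) = fst (P (F \<sigma>)) * F \<sigma> + snd (P (F \<sigma>))" using cV by auto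
    then show ?thesis using G_F[OF that] Pc[OF cV] by simp
  qed
  have "H \<sigma>0 < H \<sigma>1" using ord[OF s(2,1)] s(3) by auto
  then have "fst (P c0) * (F \<sigma>1 - F \<sigma>0) > 0" using rel[OF s(1)] rel[OF s(2)] by (simp add: algebra_simps)
  then have "fst (P c0) > 0" using s(3) by (simp add: zero_less_mult_iff)
  then show ?thesis using rel by (intro exI[of _ "fst (P c0)"] conjI exI[of _ "snd (P c0)"]) auto
qed

end

definition pull :: "('s \<Rightarrow> 't) \<Rightarrow> 's set \<Rightarrow> ('t \<Rightarrow> real) \<Rightarrow> 's \<Rightarrow> real" where
  "pull t X e = (\<lambda>a. if a \<in> X then e (t a) else 0)"

lemma push_Delta: assumes b: "bij_betw t X Y" and d: "d \<in> Delta X"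
  shows "push_dist t X d \<in> Delta Y"
proof -
  have im: "t ` X = Y" using b by (simp add: bij_betw_def)
  have bi: "bij_betw (inv_into X t) Y X" using bij_betw_inv_into[OF b] .
  have "sum (push_dist t X d) Y = sum (\<lambda>b. d (inv_into X t b)) Y"
    unfolding push_dist_def im by simp
  also have "\<dots> = sum d X" using sum.reindex_bij_betw[OF bi] .
  finally have s: "sum (push_dist t X d) Y = 1" using d unfolding Delta_def by simp
  have "\<forall>y\<in>Y. 0 \<le> push_dist t X d y"
    using d bi unfolding push_dist_def Delta_def im by (auto simp: bij_betw_def)
  moreover have "\<forall>y. y \<notin> Y \<longrightarrow> push_dist t X d y = 0" unfolding push_dist_def im by simp
  ultimately show ?thesis using s unfolding Delta_def by blast
qed

lemma pull_Delta: assumes b: "bij_betw t X Y" and e: "e \<in> Delta Y"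
  shows "pull t X e \<in> Delta X"
proof -
  have "sum (pull t X e) X = sum (\<lambda>a. e (t a)) X" unfolding pull_def by simp
  also have "\<dots> = sum e Y" using sum.reindex_bij_betw[OF b] .
  finally have s: "sum (pull t X e) X = 1" using e unfolding Delta_def by simp
  have "\<forall>x\<in>X. 0 \<le> pull t X e x" using e b unfolding pull_def Delta_def by (auto simp: bij_betw_def)
  moreover have "\<forall>x. x \<notin> X \<longrightarrow> pull t X e x = 0" unfolding pull_def by simp
  ultimately show ?thesis using s unfolding Delta_def by blast
qed

lemma push_pull: assumes b: "bij_betw t X Y" and e: "e \<in> Delta Y"
  shows "push_dist t X (pull t X e) = e"
proof
  fix y
  have im: "t ` X = Y" using b by (simp add: bij_betw_def)
  show "push_dist t X (pull t X e) y = e y"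
  proof (cases "y \<in> Y")
    case True
    then have "inv_into X t y \<in> X" "t (inv_into X t y) = y" using im
      by (auto intro: inv_into_into f_inv_into_f)
    then show ?thesis using True im unfolding push_dist_def pull_def by simp
  next
    case False
    then show ?thesis using e im unfolding push_dist_def Delta_def by auto
  qed
qed

lemma push_surj: "bij_betw t X Y \<Longrightarrow> e \<in> Delta Y \<Longrightarrow> \<exists>d\<in>Delta X. push_dist t X d = e"
  using pull_Delta push_pull by blast

lemma push_lin: "push_dist t X (\<lambda>a. p * d1 a + q * d2 a) = (\<lambda>b. p * push_dist t X d1 b + q * push_dist t X d2 b)"
  unfolding push_dist_def by auto

lemma pure_Delta: "s \<in> X \<Longrightarrow> finite X \<Longrightarrow> pure s \<in> Delta X"
  unfolding Delta_def pure_def by auto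

lemma push_pure: assumes "inj_on t X" "s \<in> X" shows "push_dist t X (pure s) = pure (t s)"
proof
  fix y show "push_dist t X (pure s) y = pure (t s) y"
    using assms unfolding push_dist_def pure_def by (auto simp: inv_into_f_f)
qed

context
  fixes N :: "'p set" and A :: "'p \<Rightarrow> 's set" and M :: "'q set" and B :: "'q \<Rightarrow> 't set"
    and \<pi> :: "'p \<Rightarrow> 'q" and \<tau> :: "'p \<Rightarrow> 's \<Rightarrow> 't"
  assumes gb: "game_bijection N A M B \<pi> \<tau>"
begin

lemma bpi: "bij_betw \<pi> N M" using gb unfolding game_bijection_def by blast
lemma btau: "i \<in> N \<Longrightarrow> bij_betw (\<tau> i) (A i) (B (\<pi> i))" using gb unfolding game_bijection_def by blast
lemma piN: "\<pi> ` N = M" using bpi by (simp add: bij_betw_def)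
lemma inj_pi: "inj_on \<pi> N" using bpi by (simp add: bij_betw_def)

lemma gmap_at: "i \<in> N \<Longrightarrow> gmap N A \<pi> \<tau> \<sigma> (\<pi> i) = push_dist (\<tau> i) (A i) (\<sigma> i)"
  unfolding gmap_def using inj_pi by (simp add: inv_into_f_f)

lemma gmap_mixed: assumes "\<sigma> \<in> mixed N A" shows "gmap N A \<pi> \<tau> \<sigma> \<in> mixed M B"
  unfolding mixed_def
proof (rule PiE_I)
  fix j assume "j \<in> M"
  then obtain i where i: "i \<in> N" "j = \<pi> i" using piN by auto
  show "gmap N A \<pi> \<tau> \<sigma> j \<in> Delta (B j)"
    unfolding i(2) gmap_at[OF i(1)] using push_Delta[OF btau[OF i(1)] mixed_in[OF assms i(1)]] .
next
  fix j assume "j \<notin> M"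
  then show "gmap N A \<pi> \<tau> \<sigma> j = undefined" unfolding gmap_def piN by simp
qed

lemma gmap_upd: assumes i: "i \<in> N"
  shows "gmap N A \<pi> \<tau> (\<sigma>(i := d)) = (gmap N A \<pi> \<tau> \<sigma>)(\<pi> i := push_dist (\<tau> i) (A i) d)"
proof
  fix j
  show "gmap N A \<pi> \<tau> (\<sigma>(i := d)) j = ((gmap N A \<pi> \<tau> \<sigma>)(\<pi> i := push_dist (\<tau> i) (A i) d)) j"
  proof (cases "j \<in> \<pi> ` N")
    case True
    then obtain k where k: "k \<in> N" "j = \<pi> k" by auto
    have ik: "inv_into N \<pi> (\<pi> k) = k" using inj_pi k(1) by (simp add: inv_into_f_f)
    show ?thesis
    proof (cases "k = i")
      case True then show ?thesis using k ik unfolding gmap_def by simp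
    next
      case False
      then have "\<pi> k \<noteq> \<pi> i" using inj_pi k(1) i by (meson inj_on_contraD)
      then show ?thesis using k ik False unfolding gmap_def by simp
    qed
  next
    case False
    then have "j \<noteq> \<pi> i" using i by auto
    then show ?thesis using False unfolding gmap_def by simp
  qed
qed

lemma gmap_surj: assumes xi: "\<xi> \<in> mixed M B" shows "\<exists>\<sigma>\<in>mixed N A. gmap N A \<pi> \<tau> \<sigma> = \<xi>"
proof -
  define \<sigma> where "\<sigma> = (\<lambda>i\<in>N. pull (\<tau> i) (A i) (\<xi> (\<pi> i)))"
  have xin: "i \<in> N \<Longrightarrow> \<xi> (\<pi> i) \<in> Delta (B (\<pi> i))" for i
    using mixed_in[OF xi] piN by blast
  have sm: "\<sigma> \<in> mixed N A" unfolding mixed_def \<sigma>_def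
    using pull_Delta[OF btau xin] by auto
  have "gmap N A \<pi> \<tau> \<sigma> = \<xi>"
  proof
    fix j show "gmap N A \<pi> \<tau> \<sigma> j = \<xi> j"
    proof (cases "j \<in> M")
      case True
      then obtain i where i: "i \<in> N" "j = \<pi> i" using piN by auto
      show ?thesis unfolding i(2) gmap_at[OF i(1)] using push_pull[OF btau[OF i(1)] xin[OF i(1)]] i(1)
        unfolding \<sigma>_def by simp
    next
      case False
      have "\<xi> j = undefined" using xi False unfolding mixed_def by (rule PiE_arb)
      then show ?thesis using False unfolding gmap_def piN by simp
    qed
  qed
  then show ?thesis using sm by blast
qed

lemma maff_H: assumes fM: "finite M" and i: "i \<in> N"
  shows "maff N A (\<lambda>\<sigma>. EU M B v (\<pi> i) (gmap N A \<pi> \<tau> \<sigma>))"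
  unfolding maff_def
proof (intro ballI allI)
  fix \<sigma> j d1 d2 p q assume "\<sigma> \<in> mixed N A" "j \<in> N"
  then have pj: "\<pi> j \<in> M" using piN by auto
  show "EU M B v (\<pi> i) (gmap N A \<pi> \<tau> (\<sigma>(j := \<lambda>a. p * d1 a + q * d2 a))) =
       p * EU M B v (\<pi> i) (gmap N A \<pi> \<tau> (\<sigma>(j := d1))) + q * EU M B v (\<pi> i) (gmap N A \<pi> \<tau> (\<sigma>(j := d2)))"
    unfolding gmap_upd[OF \<open>j \<in> N\<close>] push_lin by (rule EU_upd_lin[OF fM pj])
qed

end


lemma BR_equiv:
  assumes gb: "game_bijection N A M B \<pi> \<tau>"
    and ordi: "\<And>\<sigma> \<sigma>'. \<sigma> \<in> mixed N A \<Longrightarrow> \<sigma>' \<in> mixed N A \<Longrightarrow>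
        EU N A u i \<sigma> \<le> EU N A u i \<sigma>' \<longleftrightarrow> EU M B v (\<pi> i) (gmap N A \<pi> \<tau> \<sigma>) \<le> EU M B v (\<pi> i) (gmap N A \<pi> \<tau> \<sigma>')"
    and i: "i \<in> N" and s: "\<sigma> \<in> mixed N A" and d: "d \<in> Delta (A i)"
  shows "best_resp N A u i \<sigma> d \<longleftrightarrow> best_resp M B v (\<pi> i) (gmap N A \<pi> \<tau> \<sigma>) (push_dist (\<tau> i) (A i) d)"
proof -
  let ?g = "gmap N A \<pi> \<tau>" and ?p = "push_dist (\<tau> i) (A i)"
  have bt: "bij_betw (\<tau> i) (A i) (B (\<pi> i))" using btau[OF gb i] .
  have "best_resp N A u i \<sigma> d \<longleftrightarrow> (\<forall>d'\<in>Delta (A i). EU N A u i (\<sigma>(i := d')) \<le> EU N A u i (\<sigma>(i := d)))"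
    using d unfolding best_resp_def by blast
  also have "\<dots> \<longleftrightarrow> (\<forall>d'\<in>Delta (A i). EU M B v (\<pi> i) ((?g \<sigma>)(\<pi> i := ?p d')) \<le> EU M B v (\<pi> i) ((?g \<sigma>)(\<pi> i := ?p d)))"
    using ordi mixed_upd[OF s i] d unfolding gmap_upd[OF gb i, symmetric] by blast
  also have "\<dots> \<longleftrightarrow> (\<forall>e\<in>Delta (B (\<pi> i)). EU M B v (\<pi> i) ((?g \<sigma>)(\<pi> i := e)) \<le> EU M B v (\<pi> i) ((?g \<sigma>)(\<pi> i := ?p d)))"
    using push_Delta[OF bt] push_surj[OF bt] by metis
  also have "\<dots> \<longleftrightarrow> best_resp M B v (\<pi> i) (?g \<sigma>) (?p d)"
    unfolding best_resp_def using push_Delta[OF bt d] by blast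
  finally show ?thesis .
qed

theorem mainTheorem7:
  fixes N :: "'p set" and A :: "'p \<Rightarrow> 's set" and u :: "'p \<Rightarrow> ('p \<Rightarrow> 's) \<Rightarrow> real"
    and M :: "'q set" and B :: "'q \<Rightarrow> 't set" and v :: "'q \<Rightarrow> ('q \<Rightarrow> 't) \<Rightarrow> real"
    and \<pi> :: "'p \<Rightarrow> 'q" and \<tau> :: "'p \<Rightarrow> 's \<Rightarrow> 't"
  assumes G1: "game N A u" and G2: "game M B v"
    and iso: "cardinal_iso N A u M B v \<pi> \<tau>"
  shows "(\<forall>i\<in>N. \<exists>\<beta>>0. \<exists>\<gamma>. \<forall>\<sigma>\<in>mixed N A.
            \<beta> * EU N A u i \<sigma> + \<gamma> = EU M B v (\<pi> i) (gmap N A \<pi> \<tau> \<sigma>))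
    \<and> (\<forall>i\<in>N. \<forall>\<sigma>\<in>mixed N A.
         best_resp N A u i \<sigma> (\<sigma> i) \<longleftrightarrow>
         best_resp M B v (\<pi> i) (gmap N A \<pi> \<tau> \<sigma>) (gmap N A \<pi> \<tau> \<sigma> (\<pi> i)))
    \<and> (\<forall>\<sigma>\<in>mixed N A. \<forall>\<sigma>'\<in>mixed N A.
         game_best_resp N A u \<sigma> \<sigma>' \<longleftrightarrow>
         game_best_resp M B v (gmap N A \<pi> \<tau> \<sigma>) (gmap N A \<pi> \<tau> \<sigma>'))
    \<and> (\<forall>\<sigma>\<in>mixed N A. nash N A u \<sigma> \<longleftrightarrow> nash M B v (gmap N A \<pi> \<tau> \<sigma>))
    \<and> (\<forall>i\<in>N. \<forall>d\<in>Delta (A i). \<forall>s\<in>A i.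
         strictly_dominates N A u i d s \<longleftrightarrow>
         strictly_dominates M B v (\<pi> i) (push_dist (\<tau> i) (A i) d) (\<tau> i s))"
proof -
  let ?g = "gmap N A \<pi> \<tau>"
  have gb: "game_bijection N A M B \<pi> \<tau>" using iso unfolding cardinal_iso_def by blast
  have ordi: "\<And>i \<sigma> \<sigma>'. i \<in> N \<Longrightarrow> \<sigma> \<in> mixed N A \<Longrightarrow> \<sigma>' \<in> mixed N A \<Longrightarrow>
        EU N A u i \<sigma> \<le> EU N A u i \<sigma>' \<longleftrightarrow> EU M B v (\<pi> i) (?g \<sigma>) \<le> EU M B v (\<pi> i) (?g \<sigma>')"
    using iso unfolding cardinal_iso_def by blast
  have finN: "finite N" using G1 unfolding game_def by blast
  have finM: "finite M" using G2 unfolding game_def by blast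
  have finA: "\<And>i. i \<in> N \<Longrightarrow> finite (A i)" using G1 unfolding game_def by blast
  have piN: "\<pi> ` N = M" using piN[OF gb] .
  have P0: "\<forall>i\<in>N. \<exists>\<beta>>0. \<exists>\<gamma>. \<forall>\<sigma>\<in>mixed N A. \<beta> * EU N A u i \<sigma> + \<gamma> = EU M B v (\<pi> i) (?g \<sigma>)"
  proof
    fix i assume i: "i \<in> N"
    interpret ordpair N A "EU N A u i" "\<lambda>\<sigma>. EU M B v (\<pi> i) (?g \<sigma>)"
      using finN maff_EU[OF finN] maff_H[OF gb finM i] ordi[OF i] by unfold_locales auto
    show "\<exists>\<beta>>0. \<exists>\<gamma>. \<forall>\<sigma>\<in>mixed N A. \<beta> * EU N A u i \<sigma> + \<gamma> = EU M B v (\<pi> i) (?g \<sigma>)"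
      using affine_rel .
  qed
  have P1: "\<forall>i\<in>N. \<forall>\<sigma>\<in>mixed N A. best_resp N A u i \<sigma> (\<sigma> i) \<longleftrightarrow> best_resp M B v (\<pi> i) (?g \<sigma>) (?g \<sigma> (\<pi> i))"
    using BR_equiv[OF gb ordi] mixed_in gmap_at[OF gb] by metis
  have P2: "\<forall>\<sigma>\<in>mixed N A. \<forall>\<sigma>'\<in>mixed N A. game_best_resp N A u \<sigma> \<sigma>' \<longleftrightarrow> game_best_resp M B v (?g \<sigma>) (?g \<sigma>')"
  proof (intro ballI)
    fix \<sigma> \<sigma>' assume s: "\<sigma> \<in> mixed N A" "\<sigma>' \<in> mixed N A"
    have "game_best_resp N A u \<sigma> \<sigma>' \<longleftrightarrow> (\<forall>i\<in>N. best_resp N A u i \<sigma>' (\<sigma> i))"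
      using s unfolding game_best_resp_def by blast
    also have "\<dots> \<longleftrightarrow> (\<forall>i\<in>N. best_resp M B v (\<pi> i) (?g \<sigma>') (?g \<sigma> (\<pi> i)))"
      using BR_equiv[OF gb ordi _ s(2) mixed_in[OF s(1)]] gmap_at[OF gb] by metis
    also have "\<dots> \<longleftrightarrow> (\<forall>k\<in>M. best_resp M B v k (?g \<sigma>') (?g \<sigma> k))"
      using piN by blast
    also have "\<dots> \<longleftrightarrow> game_best_resp M B v (?g \<sigma>) (?g \<sigma>')"
      using gmap_mixed[OF gb s(1)] unfolding game_best_resp_def by blast
    finally show "game_best_resp N A u \<sigma> \<sigma>' \<longleftrightarrow> game_best_resp M B v (?g \<sigma>) (?g \<sigma>')" .
  qed
  have P3: "\<forall>\<sigma>\<in>mixed N A. nash N A u \<sigma> \<longleftrightarrow> nash M B v (?g \<sigma>)"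
  proof
    fix \<sigma> assume s: "\<sigma> \<in> mixed N A"
    have dev: "(\<exists>d\<in>Delta (A i). EU N A u i (\<sigma>(i := d)) > EU N A u i \<sigma>) \<longleftrightarrow>
       (\<exists>e\<in>Delta (B (\<pi> i)). EU M B v (\<pi> i) ((?g \<sigma>)(\<pi> i := e)) > EU M B v (\<pi> i) (?g \<sigma>))" if i: "i \<in> N" for i
    proof -
      have bt: "bij_betw (\<tau> i) (A i) (B (\<pi> i))" using btau[OF gb i] .
      have "(\<exists>d\<in>Delta (A i). EU N A u i (\<sigma>(i := d)) > EU N A u i \<sigma>) \<longleftrightarrow>
         (\<exists>d\<in>Delta (A i). EU M B v (\<pi> i) (?g (\<sigma>(i := d))) > EU M B v (\<pi> i) (?g \<sigma>))"
        using ordi[OF i mixed_upd[OF s i] s] by (meson not_le)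
      also have "\<dots> \<longleftrightarrow> (\<exists>d\<in>Delta (A i). EU M B v (\<pi> i) ((?g \<sigma>)(\<pi> i := push_dist (\<tau> i) (A i) d)) > EU M B v (\<pi> i) (?g \<sigma>))"
        unfolding gmap_upd[OF gb i] ..
      also have "\<dots> \<longleftrightarrow> (\<exists>e\<in>Delta (B (\<pi> i)). EU M B v (\<pi> i) ((?g \<sigma>)(\<pi> i := e)) > EU M B v (\<pi> i) (?g \<sigma>))"
        using push_Delta[OF bt] push_surj[OF bt] by metis
      finally show ?thesis .
    qed
    have "nash N A u \<sigma> \<longleftrightarrow> \<not> (\<exists>i\<in>N. \<exists>d\<in>Delta (A i). EU N A u i (\<sigma>(i := d)) > EU N A u i \<sigma>)"
      using s unfolding nash_def by blast
    also have "\<dots> \<longleftrightarrow> \<not> (\<exists>i\<in>N. \<exists>e\<in>Delta (B (\<pi> i)). EU M B v (\<pi> i) ((?g \<sigma>)(\<pi> i := e)) > EU M B v (\<pi> i) (?g \<sigma>))"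
      using dev by blast
    also have "\<dots> \<longleftrightarrow> \<not> (\<exists>k\<in>M. \<exists>e\<in>Delta (B k). EU M B v k ((?g \<sigma>)(k := e)) > EU M B v k (?g \<sigma>))"
      using piN by blast
    also have "\<dots> \<longleftrightarrow> nash M B v (?g \<sigma>)"
      using gmap_mixed[OF gb s] unfolding nash_def by blast
    finally show "nash N A u \<sigma> \<longleftrightarrow> nash M B v (?g \<sigma>)" .
  qed
  have P4: "\<forall>i\<in>N. \<forall>d\<in>Delta (A i). \<forall>s\<in>A i. strictly_dominates N A u i d s \<longleftrightarrow>
         strictly_dominates M B v (\<pi> i) (push_dist (\<tau> i) (A i) d) (\<tau> i s)"
  proof (intro ballI)
    fix i d s assume i: "i \<in> N" and d: "d \<in> Delta (A i)" and s: "s \<in> A i"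
    have bt: "bij_betw (\<tau> i) (A i) (B (\<pi> i))" using btau[OF gb i] .
    have ps: "pure s \<in> Delta (A i)" using pure_Delta[OF s finA[OF i]] .
    have pp: "push_dist (\<tau> i) (A i) (pure s) = pure (\<tau> i s)"
      using push_pure[OF bij_betw_imp_inj_on[OF bt] s] .
    have "strictly_dominates N A u i d s \<longleftrightarrow>
       (\<forall>\<sigma>\<in>mixed N A. EU N A u i (\<sigma>(i := d)) > EU N A u i (\<sigma>(i := pure s)))"
      unfolding strictly_dominates_def ..
    also have "\<dots> \<longleftrightarrow> (\<forall>\<sigma>\<in>mixed N A. EU M B v (\<pi> i) (?g (\<sigma>(i := d))) > EU M B v (\<pi> i) (?g (\<sigma>(i := pure s))))"
    proof -
      have "EU N A u i (\<sigma>(i := d)) > EU N A u i (\<sigma>(i := pure s)) \<longleftrightarrow>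
            EU M B v (\<pi> i) (?g (\<sigma>(i := d))) > EU M B v (\<pi> i) (?g (\<sigma>(i := pure s)))"
        if sm: "\<sigma> \<in> mixed N A" for \<sigma>
        using ordi[OF i mixed_upd[OF sm i d] mixed_upd[OF sm i ps]] by (meson not_le)
      then show ?thesis by blast
    qed
    also have "\<dots> \<longleftrightarrow> (\<forall>\<sigma>\<in>mixed N A. EU M B v (\<pi> i) ((?g \<sigma>)(\<pi> i := push_dist (\<tau> i) (A i) d)) >
                 EU M B v (\<pi> i) ((?g \<sigma>)(\<pi> i := pure (\<tau> i s))))"
      unfolding gmap_upd[OF gb i] pp ..
    also have "\<dots> \<longleftrightarrow> (\<forall>\<xi>\<in>mixed M B. EU M B v (\<pi> i) (\<xi>(\<pi> i := push_dist (\<tau> i) (A i) d)) >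
                 EU M B v (\<pi> i) (\<xi>(\<pi> i := pure (\<tau> i s))))"
      using gmap_mixed[OF gb] gmap_surj[OF gb] by metis
    also have "\<dots> \<longleftrightarrow> strictly_dominates M B v (\<pi> i) (push_dist (\<tau> i) (A i) d) (\<tau> i s)"
      unfolding strictly_dominates_def ..
    finally show "strictly_dominates N A u i d s \<longleftrightarrow>
         strictly_dominates M B v (\<pi> i) (push_dist (\<tau> i) (A i) d) (\<tau> i s)" .
  qed
  show ?thesis using P0 P1 P2 P3 P4 by blast
qed

end
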